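(* Let $L$ be a finite lattice, $\varphi\in R(L)$ with Möbius inverse $f$, and let $V$ be an order ideal of $L$. Then the support $\{x\in L: f(x)\neq0\}$ of $f$ is contained in $V$ if and only if $\nabla_V^b\varphi=0$ for every $b\in L\setminus V$.
   Context: $L$ is a finite lattice with order $\le$, meet $\wedge$, maximum $\hat1$; $R(L)$ is the space of real-valued functions on $L$. The Möbius inverse of $\varphi$ is the unique $f\in R(L)$ with $\varphi(x)=\sum_{y\le x}f(y)$ for all $x$. An order ideal (down-set) is a subset $V$ with $x\le y\in V\Rightarrow x\in V$. For a finite $A\subseteq L$ and $b\in L$, $\nabla_A^b\varphi=\sum_{A'\subseteq A}(-1)^{|A'|}\varphi(\bigwedge A'\wedge b)$ where $\bigwedge A'$ is the meet of $A'$ and $\bigwedge\emptyset=\hat1$; for nonempty $A=\{a_1,\dots,a_n\}$ this equals $\nabla_{a_1,\ldots,a_n}\varphi(b)$, where $\nabla_a\varphi(x)=\varphi(x)-\varphi(x\wedge a)$ and successive differences are iterated. *)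

theory Defs
  imports Complex_Main
begin

(* A finite lattice is modelled as a type of class {finite, complete_lattice}
   (every finite nonempty lattice is complete); Inf {} = top is the maximum. *)

definition order_ideal :: "'a::order set \<Rightarrow> bool" where
  "order_ideal V \<longleftrightarrow> (\<forall>x y. x \<le> y \<longrightarrow> y \<in> V \<longrightarrow> x \<in> V)"

definition is_moebius_inverse :: "('a::order \<Rightarrow> real) \<Rightarrow> ('a \<Rightarrow> real) \<Rightarrow> bool" where
  "is_moebius_inverse \<phi> f \<longleftrightarrow> (\<forall>x. \<phi> x = (\<Sum>y\<in>{y. y \<le> x}. f y))"

definition nabla :: "'a::complete_lattice set \<Rightarrow> 'a \<Rightarrow> ('a \<Rightarrow> real) \<Rightarrow> real" where
  "nabla A b \<phi> = (\<Sum>A'\<in>Pow A. (-1) ^ card A' * \<phi> (inf (Inf A') b))"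

end

theory Submission
  imports Defs
begin

lemma alt_sum_pow:
  assumes "finite W"
  shows "(\<Sum>X\<in>Pow W. (-1::real) ^ card X) = (if W = {} then 1 else 0)"
proof -
  have "(\<Prod>x\<in>W. (1::real) - 1) = (\<Sum>X\<in>Pow W. (-1) ^ card X * (\<Prod>x\<in>X. 1) * (\<Prod>x\<in>W-X. 1))"
    by (rule prod_diff_conv_sum[OF assms])
  moreover have "W \<noteq> {} \<Longrightarrow> card W > 0" using assms by (simp add: card_gt_0_iff)
  ultimately show ?thesis by (cases "W = {}") (auto simp: zero_power)
qed

lemma nabla_formula:
  fixes \<phi> f :: "'a::{finite, complete_lattice} \<Rightarrow> real" and V :: "'a set"
  assumes mi: "is_moebius_inverse \<phi> f"
    and oi: "order_ideal V"
  shows "nabla V b \<phi> = (\<Sum>y\<in>{y. y \<le> b \<and> y \<notin> V}. f y)"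
proof -
  have "nabla V b \<phi> = (\<Sum>A'\<in>Pow V. \<Sum>y\<in>UNIV. (-1) ^ card A' * (if y \<le> inf (Inf A') b then f y else 0))"
    unfolding nabla_def using mi unfolding is_moebius_inverse_def
    by (simp add: sum_distrib_left if_distrib sum.If_cases Int_def cong: if_cong)
  also have "\<dots> = (\<Sum>y\<in>UNIV. \<Sum>A'\<in>Pow V. (-1) ^ card A' * (if y \<le> inf (Inf A') b then f y else 0))"
    by (rule sum.swap)
  also have "\<dots> = (\<Sum>y\<in>UNIV. if y \<le> b \<and> y \<notin> V then f y else 0)"
  proof (rule sum.cong[OF refl])
    fix y
    let ?W = "{a\<in>V. y \<le> a}"
    have "(\<Sum>A'\<in>Pow V. (-1::real) ^ card A' * (if y \<le> inf (Inf A') b then f y else 0))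
        = (\<Sum>A'\<in>Pow V. if A' \<subseteq> ?W then (if y \<le> b then f y else 0) * (-1) ^ card A' else 0)"
      by (rule sum.cong[OF refl]) (auto simp: le_Inf_iff)
    also have "\<dots> = (\<Sum>A'\<in>{A'\<in>Pow V. A' \<subseteq> ?W}. (if y \<le> b then f y else 0) * (-1) ^ card A')"
      by (rule sum.inter_filter[symmetric]) simp
    also have "{A'\<in>Pow V. A' \<subseteq> ?W} = Pow ?W" by auto
    also have "(\<Sum>A'\<in>Pow ?W. (if y \<le> b then f y else 0) * (-1) ^ card A')
        = (if y \<le> b then f y else 0) * (if ?W = {} then 1 else 0)"
      by (simp add: sum_distrib_left[symmetric] alt_sum_pow)
    also have "(?W = {}) = (y \<notin> V)"
      using oi unfolding order_ideal_def by auto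
    finally show "(\<Sum>A'\<in>Pow V. (-1::real) ^ card A' * (if y \<le> inf (Inf A') b then f y else 0))
        = (if y \<le> b \<and> y \<notin> V then f y else 0)" by simp
  qed
  also have "\<dots> = (\<Sum>y\<in>{y. y \<le> b \<and> y \<notin> V}. f y)"
    by (simp add: sum.If_cases Int_def)
  finally show ?thesis .
qed

theorem proposition2p6:
  fixes \<phi> f :: "'a::{finite, complete_lattice} \<Rightarrow> real" and V :: "'a set"
  assumes "is_moebius_inverse \<phi> f"
    and "order_ideal V"
  shows "{x. f x \<noteq> 0} \<subseteq> V \<longleftrightarrow> (\<forall>b. b \<notin> V \<longrightarrow> nabla V b \<phi> = 0)"
proof
  assume "{x. f x \<noteq> 0} \<subseteq> V"
  then show "\<forall>b. b \<notin> V \<longrightarrow> nabla V b \<phi> = 0"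
    by (auto simp: nabla_formula[OF assms] intro!: sum.neutral)
next
  assume H: "\<forall>b. b \<notin> V \<longrightarrow> nabla V b \<phi> = 0"
  have main: "\<And>x. card {y. y < x} = n \<Longrightarrow> x \<notin> V \<Longrightarrow> f x = 0" for n
  proof (induction n rule: less_induct)
    case (less n x)
    have IH: "f y = 0" if "y < x" "y \<notin> V" for y
    proof -
      have "{z. z < y} \<subset> {z. z < x}" using that(1) by (auto intro: less_trans)
      then have "card {z. z < y} < card {z. z < x}" by (rule psubset_card_mono[OF finite])
      then show ?thesis using less that by blast
    qed
    have "0 = nabla V x \<phi>" using H less.prems by simp
    also have "\<dots> = (\<Sum>y\<in>{y. y \<le> x \<and> y \<notin> V}. f y)" by (rule nabla_formula[OF assms])
    also have "{y. y \<le> x \<and> y \<notin> V} = insert x {y. y < x \<and> y \<notin> V}"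
      using less.prems by (auto simp: order.order_iff_strict)
    also have "(\<Sum>y\<in>insert x {y. y < x \<and> y \<notin> V}. f y) = f x + (\<Sum>y\<in>{y. y < x \<and> y \<notin> V}. f y)"
      by (rule sum.insert) auto
    also have "(\<Sum>y\<in>{y. y < x \<and> y \<notin> V}. f y) = 0"
      using IH by (auto intro!: sum.neutral)
    finally show ?case by simp
  qed
  show "{x. f x \<noteq> 0} \<subseteq> V" using main by blast
qed

end
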